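(* Let $k,p$ be positive integers, let $G$ be a multigraph, and let $A_1,\ldots,A_p$ be vertex sets contained in $p$ pairwise distinct equivalence classes of $\sim_k$ (with $A_i$ contained in the $i$-th class). Then there is an edge set $X\subseteq E(G)$ with $|X|\le (p-1)(k-1)$ such that for all distinct $i,j\in\{1,\ldots,p\}$ the multigraph $G-X$ contains no $A_i$--$A_j$-path.
   Context: For vertices $u,v$ of a multigraph $G$, $u\sim_k v$ means that either $u=v$ or there are $k$ pairwise edge-disjoint $u$--$v$-paths in $G$; this is an equivalence relation on $V(G)$. $G-X$ denotes $G$ with the edges of $X$ deleted. An $A$--$B$-path is a path with one endvertex in $A$, one in $B$, internally disjoint from $A\cup B$. *)

theory Defs
  imports Main
begin

text \<open>A (finite) multigraph is given by a vertex set V, a set E of edge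
  identifiers and an incidence map inc assigning to each edge its pair of
  endvertices (parallel edges and loops allowed).\<close>

definition multigraph :: "'v set \<Rightarrow> 'e set \<Rightarrow> ('e \<Rightarrow> 'v \<times> 'v) \<Rightarrow> bool" where
  "multigraph V E inc \<longleftrightarrow> finite V \<and> finite E \<and>
     (\<forall>e\<in>E. fst (inc e) \<in> V \<and> snd (inc e) \<in> V)"

definition is_path :: "'v set \<Rightarrow> 'e set \<Rightarrow> ('e \<Rightarrow> 'v \<times> 'v) \<Rightarrow> 'v list \<Rightarrow> 'e list \<Rightarrow> bool" where
  "is_path V E inc vs es \<longleftrightarrow> vs \<noteq> [] \<and> length es = length vs - 1 \<and> distinct vs \<and>
     set vs \<subseteq> V \<and>
     (\<forall>i<length es. es ! i \<in> E \<and>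
        (inc (es ! i) = (vs ! i, vs ! Suc i) \<or> inc (es ! i) = (vs ! Suc i, vs ! i)))"

definition k_equiv :: "'v set \<Rightarrow> 'e set \<Rightarrow> ('e \<Rightarrow> 'v \<times> 'v) \<Rightarrow> nat \<Rightarrow> 'v \<Rightarrow> 'v \<Rightarrow> bool" where
  "k_equiv V E inc k u v \<longleftrightarrow> u = v \<or>
     (\<exists>P :: nat \<Rightarrow> 'v list \<times> 'e list.
        (\<forall>i<k. is_path V E inc (fst (P i)) (snd (P i)) \<and>
               hd (fst (P i)) = u \<and> last (fst (P i)) = v) \<and>
        (\<forall>i<k. \<forall>j<k. i \<noteq> j \<longrightarrow> set (snd (P i)) \<inter> set (snd (P j)) = {}))"

definition AB_path :: "'v set \<Rightarrow> 'e set \<Rightarrow> ('e \<Rightarrow> 'v \<times> 'v) \<Rightarrow> 'v set \<Rightarrow> 'v set \<Rightarrow> 'v list \<Rightarrow> 'e list \<Rightarrow> bool" where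
  "AB_path V E inc A B vs es \<longleftrightarrow> is_path V E inc vs es \<and>
     set vs \<inter> A = {hd vs} \<and> set vs \<inter> B = {last vs}"

end

theory Submission imports Defs "HOL-Library.Transitive_Closure_Table" begin

definition ind :: "('e \<Rightarrow> 'v \<times> 'v) \<Rightarrow> 'e \<Rightarrow> 'v \<Rightarrow> int" where
  "ind inc e x = (if fst (inc e) = x then 1 else 0) - (if snd (inc e) = x then 1 else 0)"

definition net :: "'e set \<Rightarrow> ('e \<Rightarrow> 'v \<times> 'v) \<Rightarrow> ('e \<Rightarrow> int) \<Rightarrow> 'v \<Rightarrow> int" where
  "net E inc f x = (\<Sum>e\<in>E. f e * ind inc e x)"

definition sg :: "('e \<Rightarrow> 'v \<times> 'v) \<Rightarrow> 'v list \<Rightarrow> 'e list \<Rightarrow> nat \<Rightarrow> int" where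
  "sg inc xs es i = (if inc (es!i) = (xs!i, xs!Suc i) then 1 else -1)"

definition cut :: "'e set \<Rightarrow> ('e \<Rightarrow> 'v \<times> 'v) \<Rightarrow> 'v set \<Rightarrow> 'e set" where
  "cut E inc S = {e\<in>E. (fst (inc e) \<in> S) \<noteq> (snd (inc e) \<in> S)}"

lemma reach_path:
  assumes "(\<lambda>x y. \<exists>e. ok e x y)\<^sup>*\<^sup>* u v"
  shows "\<exists>xs es. xs \<noteq> [] \<and> hd xs = u \<and> last xs = v \<and> distinct xs \<and> length es = length xs - 1
     \<and> (\<forall>i<length es. ok (es!i) (xs!i) (xs!Suc i))"
proof -
  from assms obtain ys where "rtrancl_path (\<lambda>x y. \<exists>e. ok e x y) u ys v"
    using rtranclp_eq_rtrancl_path by metis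
  then obtain ys' where p: "rtrancl_path (\<lambda>x y. \<exists>e. ok e x y) u ys' v" and d: "distinct (u#ys')"
    by (rule rtrancl_path_distinct)
  let ?xs = "u#ys'"
  define es where "es = map (\<lambda>i. SOME e. ok e (?xs!i) (?xs!Suc i)) [0..<length ys']"
  have ok: "\<forall>i<length es. ok (es!i) (?xs!i) (?xs!Suc i)"
  proof (intro allI impI)
    fix i assume "i < length es"
    hence i: "i < length ys'" by (simp add: es_def)
    from rtrancl_path_nth[OF p i] have "\<exists>e. ok e (?xs!i) (?xs!Suc i)" by simp
    hence "ok (SOME e. ok e (?xs!i) (?xs!Suc i)) (?xs!i) (?xs!Suc i)" by (rule someI_ex)
    thus "ok (es!i) (?xs!i) (?xs!Suc i)" using i by (simp add: es_def)
  qed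
  have "last ?xs = v"
  proof (cases ys')
    case Nil thus ?thesis using p by (auto elim: rtrancl_path.cases)
  next
    case (Cons a l) thus ?thesis using rtrancl_path_last[OF p] by simp
  qed
  thus ?thesis using ok d by (intro exI[of _ ?xs] exI[of _ es]) (simp add: es_def)
qed

lemma net_modify:
  assumes fin: "finite E"
    and len: "length es = length xs - 1" and ne: "xs \<noteq> []"
    and edges: "\<forall>i<length es. es!i \<in> E \<and> (inc (es!i) = (xs!i, xs!Suc i) \<or> inc (es!i) = (xs!Suc i, xs!i))"
    and nl: "\<forall>i<length es. xs!i \<noteq> xs!Suc i"
  shows "net E inc (\<lambda>e. f e + \<sigma> * (\<Sum>i<length es. if es!i = e then sg inc xs es i else 0)) x
       = net E inc f x + \<sigma> * ((if hd xs = x then 1 else 0) - (if last xs = x then 1 else 0))"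
proof -
  let ?n = "length es"
  have step: "sg inc xs es i * ind inc (es!i) x = (if xs!i = x then 1 else 0) - (if xs!Suc i = x then 1 else 0)"
    if "i < ?n" for i
    using edges nl that unfolding sg_def ind_def by (cases "inc (es!i)") auto
  have "(\<Sum>e\<in>E. (\<Sum>i<?n. if es!i = e then sg inc xs es i else 0) * ind inc e x)
      = (\<Sum>e\<in>E. \<Sum>i<?n. if es!i = e then sg inc xs es i * ind inc (es!i) x else 0)"
    by (auto simp: sum_distrib_right intro!: sum.cong)
  also have "\<dots> = (\<Sum>i<?n. \<Sum>e\<in>E. if es!i = e then sg inc xs es i * ind inc (es!i) x else 0)"
    by (rule sum.swap)
  also have "\<dots> = (\<Sum>i<?n. sg inc xs es i * ind inc (es!i) x)"
    using edges fin by (auto intro!: sum.cong)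
  also have "\<dots> = (\<Sum>i<?n. (if xs!i = x then 1 else 0) - (if xs!Suc i = x then 1 else 0))"
    using step by (auto intro!: sum.cong)
  also have "\<dots> = (if xs!0 = x then 1 else 0) - (if xs!?n = x then 1 else 0)"
    by (rule sum_lessThan_telescope')
  also have "\<dots> = (if hd xs = x then 1 else 0) - (if last xs = x then 1 else 0)"
    using ne len by (simp add: hd_conv_nth last_conv_nth)
  finally have *: "(\<Sum>e\<in>E. (\<Sum>i<?n. if es!i = e then sg inc xs es i else 0) * ind inc e x)
     = (if hd xs = x then 1 else 0) - (if last xs = x then 1 else 0)" .
  show ?thesis unfolding net_def
    by (simp add: distrib_right sum.distrib sum_distrib_left[symmetric] mult.assoc *)
qed

lemma net_sum:
  assumes "finite E" "finite S"
  shows "(\<Sum>x\<in>S. net E inc f x) = (\<Sum>e\<in>E. f e * ((if fst (inc e) \<in> S then 1 else 0) - (if snd (inc e) \<in> S then 1 else 0)))"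
proof -
  have "(\<Sum>x\<in>S. net E inc f x) = (\<Sum>e\<in>E. \<Sum>x\<in>S. f e * ind inc e x)"
    unfolding net_def by (rule sum.swap)
  also have "\<dots> = (\<Sum>e\<in>E. f e * (\<Sum>x\<in>S. ind inc e x))"
    by (simp add: sum_distrib_left)
  also have "\<dots> = (\<Sum>e\<in>E. f e * ((if fst (inc e) \<in> S then 1 else 0) - (if snd (inc e) \<in> S then 1 else 0)))"
    using assms unfolding ind_def by (simp add: sum_subtractf sum.delta)
  finally show ?thesis .
qed


definition flow :: "'v set \<Rightarrow> 'e set \<Rightarrow> ('e \<Rightarrow> 'v \<times> 'v) \<Rightarrow> 'v \<Rightarrow> 'v \<Rightarrow> ('e \<Rightarrow> int) \<Rightarrow> bool" where
  "flow V E inc u v f \<longleftrightarrow> (\<forall>e. f e \<in> {-1,0,1}) \<and> (\<forall>e. f e \<noteq> 0 \<longrightarrow> e \<in> E) \<and>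
     (\<forall>x\<in>V-{u,v}. net E inc f x = 0)"

lemma distinct_edges:
  assumes d: "distinct xs" and len: "length es = length xs - 1"
    and edges: "\<forall>i<length es. inc (es!i) = (xs!i, xs!Suc i) \<or> inc (es!i) = (xs!Suc i, xs!i)"
  shows "distinct es"
proof -
  have "i = j" if "i < length es" "j < length es" "es!i = es!j" "i < j" for i j
  proof -
    have "xs!i = xs!j \<or> xs!i = xs!Suc j" using edges that by (metis prod.inject)
    moreover have "xs!i \<noteq> xs!j" "xs!i \<noteq> xs!Suc j" using d len that
      by (simp_all add: nth_eq_iff_index_eq)
    ultimately show ?thesis by blast
  qed
  hence "\<forall>i<length es. \<forall>j<length es. es!i = es!j \<longrightarrow> i = j"
    by (metis linorder_neqE_nat)
  thus ?thesis by (simp add: distinct_conv_nth) (metis)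
qed

lemma sum_distinct_idx:
  assumes "distinct es" "i < length es"
  shows "(\<Sum>i'<length es. if es!i' = es!i then s i' else (0::int)) = s i"
proof -
  have "(\<Sum>i'<length es. if es!i' = es!i then s i' else (0::int)) = (\<Sum>i'<length es. if i' = i then s i' else 0)"
    using assms by (intro sum.cong) (auto simp: nth_eq_iff_index_eq)
  thus ?thesis using assms by simp
qed

lemma sum_notin:
  assumes "e \<notin> set es"
  shows "(\<Sum>i'<length es. if es!i' = e then s i' else (0::int)) = 0"
  using assms by (intro sum.neutral) auto


lemma path_basic:
  assumes mg: "multigraph V E inc" and u: "hd xs \<in> V"
    and ne: "xs \<noteq> []" and d: "distinct xs" and len: "length es = length xs - 1"
    and edges: "\<forall>i<length es. es!i \<in> E \<and> (inc (es!i) = (xs!i, xs!Suc i) \<or> inc (es!i) = (xs!Suc i, xs!i))"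
  shows "is_path V E inc xs es" "distinct es" "\<forall>i<length es. xs!i \<noteq> xs!Suc i"
proof -
  show "distinct es" using distinct_edges[OF d len] edges by blast
  show "\<forall>i<length es. xs!i \<noteq> xs!Suc i" using d len by (simp add: nth_eq_iff_index_eq)
  have "xs!i \<in> V" if "i < length xs" for i
  proof (cases i)
    case 0 thus ?thesis using u ne by (simp add: hd_conv_nth)
  next
    case (Suc i')
    hence "i' < length es" using that len by simp
    hence "es!i' \<in> E" "inc (es!i') = (xs!i', xs!i) \<or> inc (es!i') = (xs!i, xs!i')"
      using edges Suc by auto
    thus ?thesis using mg unfolding multigraph_def by (metis fst_conv snd_conv)
  qed
  hence "set xs \<subseteq> V" by (auto simp: in_set_conv_nth)
  thus "is_path V E inc xs es" unfolding is_path_def using ne d len edges by auto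
qed

lemma reach_in_V:
  assumes mg: "multigraph V E inc" and u: "u \<in> V"
    and okE: "\<And>e a b. ok e a b \<Longrightarrow> e \<in> E \<and> (inc e = (a,b) \<or> inc e = (b,a))"
    and r: "(\<lambda>x y. \<exists>e. ok e x y)\<^sup>*\<^sup>* u y"
  shows "y \<in> V"
  using r
proof (induction rule: rtranclp_induct)
  case base thus ?case using u .
next
  case (step y z)
  then obtain e where "ok e y z" by blast
  from okE[OF this] mg show ?case unfolding multigraph_def by (metis fst_conv snd_conv)
qed

lemma flow_exists:
  assumes mg: "multigraph V E inc" and u: "u \<in> V" and v: "v \<in> V" and uv: "u \<noteq> v"
    and cuts: "\<forall>S. S \<subseteq> V \<and> u \<in> S \<and> v \<notin> S \<longrightarrow> k \<le> card (cut E inc S)"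
  shows "j \<le> k \<Longrightarrow> \<exists>f. flow V E inc u v f \<and> net E inc f u = int j"
proof (induction j)
  case 0
  show ?case by (rule exI[of _ "\<lambda>_. 0"]) (simp add: flow_def net_def)
next
  case (Suc j)
  then obtain f where fl: "flow V E inc u v f" and val: "net E inc f u = int j" by auto
  have finE: "finite E" and finV: "finite V" using mg by (auto simp: multigraph_def)
  define ok where "ok e a b \<longleftrightarrow> e \<in> E \<and> ((inc e = (a,b) \<and> f e \<le> 0) \<or> (inc e = (b,a) \<and> f e \<ge> 0))" for e a b
  have okE: "\<And>e a b. ok e a b \<Longrightarrow> e \<in> E \<and> (inc e = (a,b) \<or> inc e = (b,a))" unfolding ok_def by auto
  define R where "R = {y. (\<lambda>x y. \<exists>e. ok e x y)\<^sup>*\<^sup>* u y}"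
  have RV: "R \<subseteq> V" unfolding R_def using reach_in_V[OF mg u okE] by blast
  show ?case
  proof (cases "v \<in> R")
    case True
    then obtain xs es where ne: "xs \<noteq> []" and hd: "hd xs = u" and lst: "last xs = v" and d: "distinct xs"
      and len: "length es = length xs - 1" and okp: "\<forall>i<length es. ok (es!i) (xs!i) (xs!Suc i)"
      using reach_path[of ok u v] unfolding R_def by blast
    have edges: "\<forall>i<length es. es!i \<in> E \<and> (inc (es!i) = (xs!i, xs!Suc i) \<or> inc (es!i) = (xs!Suc i, xs!i))"
      using okp okE by blast
    note pb = path_basic[OF mg _ ne d len edges, unfolded hd, OF u]
    define g where "g e = f e + 1 * (\<Sum>i<length es. if es!i = e then sg inc xs es i else 0)" for e
    have netg: "net E inc g x = net E inc f x + 1 * ((if hd xs = x then 1 else 0) - (if last xs = x then 1 else 0))" for x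
      unfolding g_def by (rule net_modify[OF finE len ne edges pb(3)])
    have gval: "g e \<in> {-1,0,1} \<and> (g e \<noteq> 0 \<longrightarrow> e \<in> E)" for e
    proof (cases "e \<in> set es")
      case True
      then obtain i where i: "i < length es" "e = es!i" by (auto simp: in_set_conv_nth)
      have "g e = f e + sg inc xs es i" unfolding g_def using sum_distinct_idx[OF pb(2) i(1)] i by simp
      moreover have "xs!i \<noteq> xs!Suc i" using pb(3) i by blast
      moreover have "f e \<in> {-1,0,1}" using fl by (simp add: flow_def)
      ultimately show ?thesis using okp i unfolding ok_def sg_def by auto
    next
      case False
      thus ?thesis unfolding g_def using sum_notin[OF False] fl by (simp add: flow_def)
    qed
    have "flow V E inc u v g" unfolding flow_def using gval netg fl hd lst by (auto simp: flow_def)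
    moreover have "net E inc g u = int (Suc j)" using netg[of u] val hd lst uv by simp
    ultimately show ?thesis by blast
  next
    case False
    have uR: "u \<in> R" unfolding R_def by simp
    have finR: "finite R" using RV finV finite_subset by blast
    have "(\<Sum>x\<in>R. net E inc f x) = net E inc f u + (\<Sum>x\<in>R-{u}. net E inc f x)"
      using finR uR by (simp add: sum.remove)
    also have "(\<Sum>x\<in>R-{u}. net E inc f x) = 0"
      using fl False RV unfolding flow_def by (intro sum.neutral) auto
    finally have s1: "(\<Sum>x\<in>R. net E inc f x) = int j" using val by simp
    have trm: "f e * ((if fst (inc e) \<in> R then 1 else 0) - (if snd (inc e) \<in> R then 1 else 0))
        = (if e \<in> cut E inc R then 1 else 0)" if eE: "e \<in> E" for e
    proof -
      have fv: "f e \<in> {-1,0,1}" using fl by (simp add: flow_def)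
      have clos: "b \<in> R" if "a \<in> R" "ok e a b" for a b
        using that unfolding R_def by (auto intro: rtranclp.rtrancl_into_rtrancl)
      show ?thesis
      proof (cases "fst (inc e) \<in> R"; cases "snd (inc e) \<in> R")
        assume a: "fst (inc e) \<in> R" "snd (inc e) \<notin> R"
        hence "\<not> ok e (fst (inc e)) (snd (inc e))" using clos by blast
        hence "f e = 1" using fv eE unfolding ok_def by auto
        thus ?thesis using a eE by (simp add: cut_def)
      next
        assume a: "fst (inc e) \<notin> R" "snd (inc e) \<in> R"
        hence "\<not> ok e (snd (inc e)) (fst (inc e))" using clos by blast
        hence "f e = -1" using fv eE unfolding ok_def by auto
        thus ?thesis using a eE by (simp add: cut_def)
      qed (auto simp: cut_def)
    qed
    have "(\<Sum>x\<in>R. net E inc f x) = (\<Sum>e\<in>E. if e \<in> cut E inc R then 1 else 0)"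
      using net_sum[OF finE finR] trm by simp
    also have "\<dots> = int (card (cut E inc R))"
    proof -
      have "cut E inc R \<subseteq> E" by (auto simp: cut_def)
      hence "(\<Sum>e\<in>E. if e \<in> cut E inc R then 1 else 0) = (\<Sum>e\<in>cut E inc R. (1::int))"
        using finE by (simp add: sum.If_cases Int_absorb1 Int_commute)
      thus ?thesis by simp
    qed
    finally have "int j = int (card (cut E inc R))" using s1 by simp
    moreover have "k \<le> card (cut E inc R)" using cuts RV uR False by blast
    ultimately show ?thesis using Suc.prems by simp
  qed
qed


lemma decompose:
  assumes mg: "multigraph V E inc" and u: "u \<in> V" and v: "v \<in> V" and uv: "u \<noteq> v"
  shows "flow V E inc u v f \<Longrightarrow> net E inc f u = int j \<Longrightarrow>
    \<exists>Ps. length Ps = j \<and>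
      (\<forall>i<j. is_path V E inc (fst (Ps!i)) (snd (Ps!i)) \<and> hd (fst (Ps!i)) = u \<and> last (fst (Ps!i)) = v
             \<and> set (snd (Ps!i)) \<subseteq> {e. f e \<noteq> 0}) \<and>
      (\<forall>i<j. \<forall>i'<j. i \<noteq> i' \<longrightarrow> set (snd (Ps!i)) \<inter> set (snd (Ps!i')) = {})"
proof (induction j arbitrary: f)
  case 0
  show ?case by (rule exI[of _ "[]"]) simp
next
  case (Suc j)
  note fl = Suc.prems(1) and val = Suc.prems(2)
  have finE: "finite E" and finV: "finite V" using mg by (auto simp: multigraph_def)
  define ok where "ok e a b \<longleftrightarrow> e \<in> E \<and> ((inc e = (a,b) \<and> f e = 1) \<or> (inc e = (b,a) \<and> f e = -1))" for e a b
  have okE: "\<And>e a b. ok e a b \<Longrightarrow> e \<in> E \<and> (inc e = (a,b) \<or> inc e = (b,a))" unfolding ok_def by auto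
  define R where "R = {y. (\<lambda>x y. \<exists>e. ok e x y)\<^sup>*\<^sup>* u y}"
  have RV: "R \<subseteq> V" unfolding R_def using reach_in_V[OF mg u okE] by blast
  have "v \<in> R"
  proof (rule ccontr)
    assume False: "v \<notin> R"
    have uR: "u \<in> R" unfolding R_def by simp
    have finR: "finite R" using RV finV finite_subset by blast
    have "(\<Sum>x\<in>R. net E inc f x) = net E inc f u + (\<Sum>x\<in>R-{u}. net E inc f x)"
      using finR uR by (simp add: sum.remove)
    also have "(\<Sum>x\<in>R-{u}. net E inc f x) = 0"
      using fl False RV unfolding flow_def by (intro sum.neutral) auto
    finally have s1: "(\<Sum>x\<in>R. net E inc f x) = int (Suc j)" using val by simp
    have trm: "f e * ((if fst (inc e) \<in> R then 1 else 0) - (if snd (inc e) \<in> R then 1 else 0)) \<le> 0"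
      if eE: "e \<in> E" for e
    proof -
      have fv: "f e \<in> {-1,0,1}" using fl by (simp add: flow_def)
      have clos: "b \<in> R" if "a \<in> R" "ok e a b" for a b
        using that unfolding R_def by (auto intro: rtranclp.rtrancl_into_rtrancl)
      show ?thesis
      proof (cases "fst (inc e) \<in> R"; cases "snd (inc e) \<in> R")
        assume a: "fst (inc e) \<in> R" "snd (inc e) \<notin> R"
        hence "\<not> ok e (fst (inc e)) (snd (inc e))" using clos by blast
        hence "f e \<noteq> 1" using fv eE unfolding ok_def by auto
        thus ?thesis using a fv by auto
      next
        assume a: "fst (inc e) \<notin> R" "snd (inc e) \<in> R"
        hence "\<not> ok e (snd (inc e)) (fst (inc e))" using clos by blast
        hence "f e \<noteq> -1" using fv eE unfolding ok_def by auto
        thus ?thesis using a fv by auto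
      qed auto
    qed
    have "(\<Sum>x\<in>R. net E inc f x) \<le> 0"
      unfolding net_sum[OF finE finR] using trm by (intro sum_nonpos) auto
    thus False using s1 by simp
  qed
  then obtain xs es where ne: "xs \<noteq> []" and hd: "hd xs = u" and lst: "last xs = v" and d: "distinct xs"
    and len: "length es = length xs - 1" and okp: "\<forall>i<length es. ok (es!i) (xs!i) (xs!Suc i)"
    using reach_path[of ok u v] unfolding R_def by blast
  have edges: "\<forall>i<length es. es!i \<in> E \<and> (inc (es!i) = (xs!i, xs!Suc i) \<or> inc (es!i) = (xs!Suc i, xs!i))"
    using okp okE by blast
  note pb = path_basic[OF mg _ ne d len edges, unfolded hd, OF u]
  define g where "g e = f e + (-1) * (\<Sum>i<length es. if es!i = e then sg inc xs es i else 0)" for e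
  have netg: "net E inc g x = net E inc f x + (-1) * ((if hd xs = x then 1 else 0) - (if last xs = x then 1 else 0))" for x
    unfolding g_def by (rule net_modify[OF finE len ne edges pb(3)])
  have gval: "(e \<in> set es \<longrightarrow> g e = 0 \<and> f e \<noteq> 0) \<and> (e \<notin> set es \<longrightarrow> g e = f e)" for e
  proof (cases "e \<in> set es")
    case True
    then obtain i where i: "i < length es" "e = es!i" by (auto simp: in_set_conv_nth)
    have "g e = f e - sg inc xs es i" unfolding g_def using sum_distinct_idx[OF pb(2) i(1)] i by simp
    moreover have "xs!i \<noteq> xs!Suc i" using pb(3) i by blast
    ultimately show ?thesis using okp i True unfolding ok_def sg_def by auto
  next
    case False
    thus ?thesis unfolding g_def using sum_notin[OF False] by simp
  qed
  have flg: "flow V E inc u v g" unfolding flow_def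
  proof (intro conjI allI impI ballI)
    fix e show "g e \<in> {-1,0,1}" using fl gval[of e] by (cases "e \<in> set es") (auto simp: flow_def)
  next
    fix e assume "g e \<noteq> 0" thus "e \<in> E" using fl gval[of e] by (cases "e \<in> set es") (auto simp: flow_def)
  next
    fix x assume "x \<in> V - {u,v}" thus "net E inc g x = 0" using fl netg[of x] hd lst by (auto simp: flow_def)
  qed
  have "net E inc g u = int j" using netg[of u] val hd lst uv by simp
  from Suc.IH[OF flg this] obtain Ps where Ps: "length Ps = j"
    "\<forall>i<j. is_path V E inc (fst (Ps!i)) (snd (Ps!i)) \<and> hd (fst (Ps!i)) = u \<and> last (fst (Ps!i)) = v
             \<and> set (snd (Ps!i)) \<subseteq> {e. g e \<noteq> 0}"
    "\<forall>i<j. \<forall>i'<j. i \<noteq> i' \<longrightarrow> set (snd (Ps!i)) \<inter> set (snd (Ps!i')) = {}" by blast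
  have sub: "{e. g e \<noteq> 0} \<subseteq> {e. f e \<noteq> 0} - set es"
  proof
    fix e assume "e \<in> {e. g e \<noteq> 0}"
    thus "e \<in> {e. f e \<noteq> 0} - set es" using gval[of e] by (cases "e \<in> set es") auto
  qed
  have sub2: "set es \<subseteq> {e. f e \<noteq> 0}" using gval by auto
  let ?Q = "(xs, es) # Ps"
  have A: "\<forall>i<Suc j. is_path V E inc (fst (?Q!i)) (snd (?Q!i)) \<and> hd (fst (?Q!i)) = u \<and> last (fst (?Q!i)) = v
             \<and> set (snd (?Q!i)) \<subseteq> {e. f e \<noteq> 0}"
  proof (intro allI impI)
    fix i assume "i < Suc j"
    thus "is_path V E inc (fst (?Q!i)) (snd (?Q!i)) \<and> hd (fst (?Q!i)) = u \<and> last (fst (?Q!i)) = v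
             \<and> set (snd (?Q!i)) \<subseteq> {e. f e \<noteq> 0}"
      using Ps(2) pb(1) hd lst sub sub2 by (cases i) auto
  qed
  have B: "\<forall>i<Suc j. \<forall>i'<Suc j. i \<noteq> i' \<longrightarrow> set (snd (?Q!i)) \<inter> set (snd (?Q!i')) = {}"
  proof (intro allI impI)
    fix i i' assume "i < Suc j" "i' < Suc j" "i \<noteq> i'"
    thus "set (snd (?Q!i)) \<inter> set (snd (?Q!i')) = {}"
      using Ps(2,3) sub by (cases i; cases i') fastforce+
  qed
  show ?case using A B Ps(1) by (intro exI[of _ ?Q]) simp
qed


lemma menger:
  assumes mg: "multigraph V E inc" and u: "u \<in> V" and v: "v \<in> V" and uv: "u \<noteq> v"
    and ne: "\<not> k_equiv V E inc k u v"
  shows "\<exists>S\<subseteq>V. u \<in> S \<and> v \<notin> S \<and> card (cut E inc S) < k"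
proof (rule ccontr)
  assume "\<not> ?thesis"
  hence cuts: "\<forall>S. S \<subseteq> V \<and> u \<in> S \<and> v \<notin> S \<longrightarrow> k \<le> card (cut E inc S)" by (auto simp: not_less)
  obtain f where "flow V E inc u v f" "net E inc f u = int k"
    using flow_exists[OF mg u v uv cuts] by blast
  from decompose[OF mg u v uv this] obtain Ps where
    "\<forall>i<k. is_path V E inc (fst (Ps!i)) (snd (Ps!i)) \<and> hd (fst (Ps!i)) = u \<and> last (fst (Ps!i)) = v"
    "\<forall>i<k. \<forall>i'<k. i \<noteq> i' \<longrightarrow> set (snd (Ps!i)) \<inter> set (snd (Ps!i')) = {}" by blast
  hence "k_equiv V E inc k u v" unfolding k_equiv_def by (intro disjI2 exI[of _ "\<lambda>i. Ps!i"]) auto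
  thus False using ne by blast
qed

lemma first_exit: "h 0 \<Longrightarrow> \<not> h n \<Longrightarrow> \<exists>m<n. h m \<and> \<not> h (Suc m)"
proof (induction n)
  case (Suc n) thus ?case by (cases "h n") (auto intro: less_SucI)
qed auto

lemma crossing:
  assumes p: "is_path V E' inc vs es" and x: "(hd vs \<in> S) \<noteq> (last vs \<in> S)"
  shows "\<exists>e\<in>set es. e \<in> cut E' inc S"
proof -
  have ne: "vs \<noteq> []" and len: "length es = length vs - 1" using p by (auto simp: is_path_def)
  define n where "n = length es"
  have hd: "hd vs = vs!0" and lst: "last vs = vs!n" using ne len by (auto simp: hd_conv_nth last_conv_nth n_def)
  have "\<exists>m<n. (vs!m \<in> S) \<noteq> (vs!Suc m \<in> S)"
  proof (cases "hd vs \<in> S")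
    case True
    thus ?thesis using first_exit[of "\<lambda>i. vs!i \<in> S" n] x hd lst by auto
  next
    case False
    thus ?thesis using first_exit[of "\<lambda>i. vs!i \<notin> S" n] x hd lst by auto
  qed
  then obtain m where m: "m < n" "(vs!m \<in> S) \<noteq> (vs!Suc m \<in> S)" by blast
  have "es!m \<in> E'" "inc (es!m) = (vs!m, vs!Suc m) \<or> inc (es!m) = (vs!Suc m, vs!m)"
    using p m(1) unfolding is_path_def n_def by auto
  hence "es!m \<in> cut E' inc S" using m(2) unfolding cut_def by auto
  thus ?thesis using m(1) n_def by auto
qed

lemma cut_sep:
  fixes V :: "'v set" and E :: "'e set" and inc :: "'e \<Rightarrow> 'v \<times> 'v"
  assumes mg: "multigraph V E inc" and x: "(u \<in> S) \<noteq> (w \<in> S)" and c: "card (cut E inc S) < k"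
    and ke: "k_equiv V E inc k u w"
  shows False
proof -
  have uw: "u \<noteq> w" using x by blast
  then obtain P :: "nat \<Rightarrow> 'v list \<times> 'e list" where
    P: "\<forall>i<k. is_path V E inc (fst (P i)) (snd (P i)) \<and> hd (fst (P i)) = u \<and> last (fst (P i)) = w"
    and dis: "\<forall>i<k. \<forall>j<k. i \<noteq> j \<longrightarrow> set (snd (P i)) \<inter> set (snd (P j)) = {}"
    using ke unfolding k_equiv_def by blast
  have "\<forall>i<k. \<exists>e. e \<in> set (snd (P i)) \<and> e \<in> cut E inc S"
  proof (intro allI impI)
    fix i assume "i < k"
    hence "is_path V E inc (fst (P i)) (snd (P i))" "(hd (fst (P i)) \<in> S) \<noteq> (last (fst (P i)) \<in> S)"
      using P x by auto
    from crossing[OF this] show "\<exists>e. e \<in> set (snd (P i)) \<and> e \<in> cut E inc S" by blast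
  qed
  then obtain ch where ch: "\<forall>i<k. ch i \<in> set (snd (P i)) \<and> ch i \<in> cut E inc S" by metis
  have inj: "inj_on ch {..<k}"
  proof (rule inj_onI)
    fix i j assume "i \<in> {..<k}" "j \<in> {..<k}" "ch i = ch j"
    thus "i = j" using ch dis by (metis disjoint_iff lessThan_iff)
  qed
  have "ch ` {..<k} \<subseteq> cut E inc S" using ch by auto
  moreover have "finite (cut E inc S)" using mg by (auto simp: multigraph_def cut_def)
  ultimately have "card (ch ` {..<k}) \<le> card (cut E inc S)" by (rule card_mono[rotated])
  thus False using card_image[OF inj] c by simp
qed


lemma AB_path_mono:
  "AB_path V E1 inc A B vs es \<Longrightarrow> E1 \<subseteq> E2 \<Longrightarrow> AB_path V E2 inc A B vs es"
  unfolding AB_path_def is_path_def by blast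

lemma main_gen:
  fixes V :: "'v set" and E :: "'e set" and inc :: "'e \<Rightarrow> 'v \<times> 'v"
    and A :: "nat \<Rightarrow> 'v set" and c :: "nat \<Rightarrow> 'v"
  assumes mg: "multigraph V E inc" and k: "k \<ge> 1"
  shows "finite I \<Longrightarrow> I \<noteq> {} \<Longrightarrow>
    \<forall>i\<in>I. c i \<in> V \<and> A i \<subseteq> {v \<in> V. k_equiv V E inc k v (c i)} \<Longrightarrow>
    \<forall>i\<in>I. \<forall>j\<in>I. i \<noteq> j \<longrightarrow> \<not> k_equiv V E inc k (c i) (c j) \<Longrightarrow>
    \<exists>X \<subseteq> E. card X \<le> (card I - 1) * (k - 1) \<and>
      (\<forall>i\<in>I. \<forall>j\<in>I. i \<noteq> j \<longrightarrow> \<not> (\<exists>vs es. AB_path V (E - X) inc (A i) (A j) vs es))"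
proof (induction "card I" arbitrary: I rule: less_induct)
  case less
  note fin = less.prems(1) and ne = less.prems(2) and hA = less.prems(3) and hc = less.prems(4)
  show ?case
  proof (cases "\<exists>i\<in>I. \<exists>j\<in>I. i \<noteq> j")
    case False
    thus ?thesis by (intro exI[of _ "{}"]) auto
  next
    case True
    then obtain i j where ij: "i \<in> I" "j \<in> I" "i \<noteq> j" by blast
    have nk: "\<not> k_equiv V E inc k (c i) (c j)" using hc ij by blast
    have cij: "c i \<noteq> c j"
    proof
      assume "c i = c j" hence "k_equiv V E inc k (c i) (c j)" unfolding k_equiv_def by blast
      thus False using nk by blast
    qed
    have civ: "c i \<in> V" "c j \<in> V" using hA ij by auto
    obtain S where S: "S \<subseteq> V" "c i \<in> S" "c j \<notin> S" "card (cut E inc S) < k"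
      using menger[OF mg civ cij nk] by blast
    define I1 where "I1 = {l\<in>I. c l \<in> S}"
    define I2 where "I2 = I - I1"
    have i1: "i \<in> I1" and j2: "j \<in> I2" using ij S by (auto simp: I1_def I2_def)
    have fin1: "finite I1" and fin2: "finite I2" using fin by (auto simp: I1_def I2_def)
    have cardI: "card I = card I1 + card I2"
    proof -
      have "I = I1 \<union> I2" "I1 \<inter> I2 = {}" by (auto simp: I1_def I2_def)
      thus ?thesis using fin1 fin2 by (metis card_Un_disjoint)
    qed
    have c1: "card I1 \<ge> 1" and c2: "card I2 \<ge> 1" using i1 j2 fin1 fin2
      by (auto simp: Suc_le_eq card_gt_0_iff)
    have lt1: "card I1 < card I" and lt2: "card I2 < card I" using cardI c1 c2 by auto
    have sub1: "I1 \<subseteq> I" and sub2: "I2 \<subseteq> I" by (auto simp: I1_def I2_def)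
    obtain X1 where X1: "X1 \<subseteq> E" "card X1 \<le> (card I1 - 1) * (k - 1)"
      "\<forall>i\<in>I1. \<forall>j\<in>I1. i \<noteq> j \<longrightarrow> \<not> (\<exists>vs es. AB_path V (E - X1) inc (A i) (A j) vs es)"
    proof -
      have "I1 \<noteq> {}" using i1 by blast
      moreover have "\<forall>i\<in>I1. c i \<in> V \<and> A i \<subseteq> {v \<in> V. k_equiv V E inc k v (c i)}" using hA sub1 by blast
      moreover have "\<forall>i\<in>I1. \<forall>j\<in>I1. i \<noteq> j \<longrightarrow> \<not> k_equiv V E inc k (c i) (c j)" using hc sub1 by blast
      ultimately have "\<exists>X \<subseteq> E. card X \<le> (card I1 - 1) * (k - 1) \<and>
        (\<forall>i\<in>I1. \<forall>j\<in>I1. i \<noteq> j \<longrightarrow> \<not> (\<exists>vs es. AB_path V (E - X) inc (A i) (A j) vs es))"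
        by (rule less.hyps[OF lt1 fin1])
      thus ?thesis using that by blast
    qed
    obtain X2 where X2: "X2 \<subseteq> E" "card X2 \<le> (card I2 - 1) * (k - 1)"
      "\<forall>i\<in>I2. \<forall>j\<in>I2. i \<noteq> j \<longrightarrow> \<not> (\<exists>vs es. AB_path V (E - X2) inc (A i) (A j) vs es)"
    proof -
      have "I2 \<noteq> {}" using j2 by blast
      moreover have "\<forall>i\<in>I2. c i \<in> V \<and> A i \<subseteq> {v \<in> V. k_equiv V E inc k v (c i)}" using hA sub2 by blast
      moreover have "\<forall>i\<in>I2. \<forall>j\<in>I2. i \<noteq> j \<longrightarrow> \<not> k_equiv V E inc k (c i) (c j)" using hc sub2 by blast
      ultimately have "\<exists>X \<subseteq> E. card X \<le> (card I2 - 1) * (k - 1) \<and>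
        (\<forall>i\<in>I2. \<forall>j\<in>I2. i \<noteq> j \<longrightarrow> \<not> (\<exists>vs es. AB_path V (E - X) inc (A i) (A j) vs es))"
        by (rule less.hyps[OF lt2 fin2])
      thus ?thesis using that by blast
    qed
    define X where "X = X1 \<union> X2 \<union> cut E inc S"
    have XE: "X \<subseteq> E" using X1 X2 by (auto simp: X_def cut_def)
    have finE: "finite E" using mg by (simp add: multigraph_def)
    have "card X \<le> card X1 + card X2 + card (cut E inc S)"
      unfolding X_def using card_Un_le[of "X1 \<union> X2" "cut E inc S"] card_Un_le[of X1 X2] by linarith
    also have "\<dots> \<le> (card I1 - 1) * (k - 1) + (card I2 - 1) * (k - 1) + (k - 1)"
      using X1 X2 S by linarith
    also have "\<dots> = (card I - 1) * (k - 1)"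
    proof -
      obtain a b where "card I1 = Suc a" "card I2 = Suc b" using c1 c2 by (metis Suc_le_D One_nat_def)
      thus ?thesis using cardI k by (cases k) (simp_all add: algebra_simps)
    qed
    finally have cardX: "card X \<le> (card I - 1) * (k - 1)" .
    have sideS: "\<forall>a\<in>A l. (a \<in> S) = (c l \<in> S)" if "l \<in> I" for l
    proof
      fix a assume a: "a \<in> A l"
      show "(a \<in> S) = (c l \<in> S)"
      proof (rule ccontr)
        assume "(a \<in> S) \<noteq> (c l \<in> S)"
        moreover have "k_equiv V E inc k a (c l)" using hA \<open>l \<in> I\<close> a by blast
        ultimately show False by (rule cut_sep[OF mg _ S(4)])
      qed
    qed
    have sep: "\<not> (\<exists>vs es. AB_path V (E - X) inc (A l) (A l') vs es)"
      if l: "l \<in> I" "l' \<in> I" "l \<noteq> l'" for l l'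
    proof
      assume "\<exists>vs es. AB_path V (E - X) inc (A l) (A l') vs es"
      then obtain vs es where p: "AB_path V (E - X) inc (A l) (A l') vs es" by blast
      show False
      proof (cases "(c l \<in> S) = (c l' \<in> S)")
        case True
        hence "(l \<in> I1 \<and> l' \<in> I1) \<or> (l \<in> I2 \<and> l' \<in> I2)" using l by (auto simp: I1_def I2_def)
        thus False
        proof
          assume "l \<in> I1 \<and> l' \<in> I1"
          moreover have "AB_path V (E - X1) inc (A l) (A l') vs es"
            using AB_path_mono[OF p] by (auto simp: X_def)
          ultimately show False using X1(3) l(3) by blast
        next
          assume "l \<in> I2 \<and> l' \<in> I2"
          moreover have "AB_path V (E - X2) inc (A l) (A l') vs es"
            using AB_path_mono[OF p] by (auto simp: X_def)
          ultimately show False using X2(3) l(3) by blast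
        qed
      next
        case False
        have pp: "is_path V (E - X) inc vs es" and h: "hd vs \<in> A l" and la: "last vs \<in> A l'"
          using p unfolding AB_path_def by auto
        have "(hd vs \<in> S) \<noteq> (last vs \<in> S)" using sideS[OF l(1)] sideS[OF l(2)] h la False by blast
        from crossing[OF pp this] obtain e where "e \<in> cut (E - X) inc S" by blast
        thus False by (auto simp: cut_def X_def)
      qed
    qed
    show ?thesis using XE cardX sep by blast
  qed
qed

theorem lemma10:
  fixes V :: "'v set" and E :: "'e set" and inc :: "'e \<Rightarrow> 'v \<times> 'v"
    and k p :: nat and A :: "nat \<Rightarrow> 'v set" and c :: "nat \<Rightarrow> 'v"
  assumes "multigraph V E inc"
    and "k \<ge> 1" and "p \<ge> 1"
    and "\<forall>i<p. c i \<in> V \<and> A i \<subseteq> {v \<in> V. k_equiv V E inc k v (c i)}"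
    and "\<forall>i<p. \<forall>j<p. i \<noteq> j \<longrightarrow> \<not> k_equiv V E inc k (c i) (c j)"
  shows "\<exists>X \<subseteq> E. card X \<le> (p - 1) * (k - 1) \<and>
           (\<forall>i<p. \<forall>j<p. i \<noteq> j \<longrightarrow>
              \<not> (\<exists>vs es. AB_path V (E - X) inc (A i) (A j) vs es))"
proof -
  have "{..<p} \<noteq> {}" using assms(3) by (simp add: lessThan_empty_iff)
  have f: "finite {..<p}" by simp
  have "\<exists>X \<subseteq> E. card X \<le> (card {..<p} - 1) * (k - 1) \<and>
      (\<forall>i\<in>{..<p}. \<forall>j\<in>{..<p}. i \<noteq> j \<longrightarrow> \<not> (\<exists>vs es. AB_path V (E - X) inc (A i) (A j) vs es))"
    by (rule main_gen[OF assms(1,2) f \<open>{..<p} \<noteq> {}\<close>]) (use assms(4,5) in auto)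
  thus ?thesis by (simp only: lessThan_iff Ball_def card_lessThan)
qed

end
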